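(* For the canonical collection $\mathcal{S}$, $$B(\mathcal{S}):=\int_0^\infty\big|\{S\in\mathcal{S}: t\text{ is }S\text{-bad}\}\big|\,dt\ \le\ 2\cdot\mathrm{excess}(\mathrm{OPT}).$$
   Context: Steiner Forest: finite undirected graph $G=(V,E)$ with non-negative edge costs $(c_e)_{e\in E}$ and a set $\mathcal{D}$ of demand pairs $\{a,b\}\subseteq V$ (partners); feasible solutions are $F\subseteq E$ with each demand pair in one connected component of $(V,F)$, of cost $c(F)=\sum_{e\in F}c_e$. $\mathrm{OPT}$ is a fixed optimal solution that is inclusionwise minimal (no cost-$0$ edge can be omitted keeping feasibility). For $U\subseteq V$, $\delta(U)$ is the set of edges with exactly one endpoint in $U$; $U$ separates $S$ if $S\cap U\ne\emptyset$ and $S\setminus U\ne\emptyset$. The $\varepsilon$-extended moat-growing algorithm (fixed $\varepsilon\ge0$): time $t$ increases continuously from $0$ at unit rate; it maintains tight edges $F$ (initially empty), duals $y_S(t)\ge0$ (initially $0$), and budgets of components (initially $0$). $\mathcal{C}^t$ is the family of vertex sets of connected components of $(V,F)$. A component is demand-active if it contains a vertex not connected in $(V,F)$ to some partner; budget-active if not demand-active but with positive budget; active if either; $\mathcal{A}^t$ is the set of active components. Each $y_S$, $S\in\mathcal{A}^t$, grows at unit rate; budgets of demand-active components grow at rate $\varepsilon$ and of budget-active ones decrease at rate $1$; an edge $e$ with $\sum_{S:e\in\delta(S)}y_S(t)=c_e$ becomes tight and is added to $F$; merging components add budgets. $y_S=y_S(\infty)$; $\mathcal{U}_{\mathrm{sep}}$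 is the set of $U\in\mathrm{supp}(y)$ separating some demand pair; $\mathrm{excess}(F)=c(F)-\sum_{U\in\mathcal{U}_{\mathrm{sep}}}y_U$. The deactivation time $\tau_v$ of $v$ is the largest $t$ such that for all $s<t$, $v$ lies in a set of $\mathcal{A}^s$. Vertices $u,v$ are actively connected if for some $t$ they lie in a common set of $\mathcal{C}^t$ and $\tau_u,\tau_v\ge t$ (an equivalence relation). Canonical collection $\mathcal{S}$: start with a family $\mathcal{F}$ in which each tree of $\mathrm{OPT}$ is its own forest; for each $U\in\mathcal{U}_{\mathrm{sep}}$, merge all forests of $\mathcal{F}$ that connect some demand pair separated by $U$ into a single forest. For each $F\in\mathcal{F}$ let $r_F$ be a vertex of $F$ with maximum deactivation time; for each connected component $T$ of $F$, let $S$ be the set of vertices of $T$ actively connected to $r_F$; if $S\ne\emptyset$, add $S$ to $\mathcal{S}$. For $S\in\mathcal{S}$, a time $t\ge0$ is $S$-bad if some set $U\in\mathcal{A}^t$ that separates $S$ also separates some other set $S'\in\mathcal{S}\setminus\{S\}$; otherwise $t$ is $S$-good. *)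

theory Defs
  imports "HOL-Analysis.Analysis"
begin

text \<open>A finite undirected (multi)graph: vertex set V, edge set E, and
  endp e = the two-element set of endpoints of edge e.\<close>

definition adj :: "('e \<Rightarrow> 'v set) \<Rightarrow> 'e set \<Rightarrow> ('v \<times> 'v) set" where
  "adj endp F = {(u, w). \<exists>e\<in>F. endp e = {u, w}}"

definition comp :: "('e \<Rightarrow> 'v set) \<Rightarrow> 'e set \<Rightarrow> 'v \<Rightarrow> 'v set" where
  "comp endp F v = {w. (v, w) \<in> (adj endp F)\<^sup>*}"

definition comps :: "('e \<Rightarrow> 'v set) \<Rightarrow> 'v set \<Rightarrow> 'e set \<Rightarrow> 'v set set" where
  "comps endp V F = comp endp F ` V"

definition separates :: "'v set \<Rightarrow> 'v set \<Rightarrow> bool" where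
  "separates U S \<longleftrightarrow> S \<inter> U \<noteq> {} \<and> S - U \<noteq> {}"

definition feasible :: "'v set \<Rightarrow> 'e set \<Rightarrow> ('e \<Rightarrow> 'v set) \<Rightarrow> 'v set set \<Rightarrow> 'e set \<Rightarrow> bool" where
  "feasible V E endp D F \<longleftrightarrow> F \<subseteq> E \<and> (\<forall>d\<in>D. \<exists>C\<in>comps endp V F. d \<subseteq> C)"

definition cost :: "('e \<Rightarrow> real) \<Rightarrow> 'e set \<Rightarrow> real" where
  "cost c F = sum c F"

definition delta :: "'e set \<Rightarrow> ('e \<Rightarrow> 'v set) \<Rightarrow> 'v set \<Rightarrow> 'e set" where
  "delta E endp U = {e\<in>E. card (endp e \<inter> U) = 1}"

text \<open>A run is described by the family act t of active components at time t
  (the sets of A^t).  Everything else is derived from it.\<close>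

definition dem_active :: "'v set set \<Rightarrow> 'v set \<Rightarrow> bool" where
  "dem_active D C \<longleftrightarrow> (\<exists>d\<in>D. separates C d)"

definition yval :: "(real \<Rightarrow> 'v set set) \<Rightarrow> 'v set \<Rightarrow> real \<Rightarrow> real" where
  "yval act S t = measure lborel {s\<in>{0..<t}. S \<in> act s}"

text \<open>Budget of component C at time t: budgets of all earlier components
  contained in C (its ancestors, whose budgets were added up on merging) grow at
  rate eps while demand-active and decrease at rate 1 while budget-active.\<close>
definition budget :: "real \<Rightarrow> 'v set set \<Rightarrow> (real \<Rightarrow> 'v set set) \<Rightarrow> 'v set \<Rightarrow> real \<Rightarrow> real" where
  "budget eps D act C t =
     (\<Sum>S\<in>Pow C. (if dem_active D S then eps else -1) * yval act S t)"

definition tight :: "'v set \<Rightarrow> 'e set \<Rightarrow> ('e \<Rightarrow> 'v set) \<Rightarrow> ('e \<Rightarrow> real)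
    \<Rightarrow> (real \<Rightarrow> 'v set set) \<Rightarrow> real \<Rightarrow> 'e set" where
  "tight V E endp c act t =
     {e\<in>E. c e \<le> (\<Sum>S\<in>{S\<in>Pow V. e \<in> delta E endp S}. yval act S t)}"

definition comps_at :: "'v set \<Rightarrow> 'e set \<Rightarrow> ('e \<Rightarrow> 'v set) \<Rightarrow> ('e \<Rightarrow> real)
    \<Rightarrow> (real \<Rightarrow> 'v set set) \<Rightarrow> real \<Rightarrow> 'v set set" where
  "comps_at V E endp c act t = comps endp V (tight V E endp c act t)"

definition moat_run :: "'v set \<Rightarrow> 'e set \<Rightarrow> ('e \<Rightarrow> 'v set) \<Rightarrow> ('e \<Rightarrow> real)
    \<Rightarrow> 'v set set \<Rightarrow> real \<Rightarrow> (real \<Rightarrow> 'v set set) \<Rightarrow> bool" where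
  "moat_run V E endp c D eps act \<longleftrightarrow>
     (\<forall>t\<ge>0. act t = {C\<in>comps_at V E endp c act t.
                        dem_active D C \<or> budget eps D act C t > 0}) \<and>
     (\<forall>S. {s\<in>{0..}. S \<in> act s} \<in> sets lborel)"

definition yfin :: "(real \<Rightarrow> 'v set set) \<Rightarrow> 'v set \<Rightarrow> real" where
  "yfin act S = measure lborel {s\<in>{0..}. S \<in> act s}"

definition U_sep :: "'v set \<Rightarrow> 'v set set \<Rightarrow> (real \<Rightarrow> 'v set set) \<Rightarrow> 'v set set" where
  "U_sep V D act = {U. U \<subseteq> V \<and> yfin act U > 0 \<and> (\<exists>d\<in>D. separates U d)}"

definition excess :: "'v set \<Rightarrow> ('e \<Rightarrow> real) \<Rightarrow> 'v set set \<Rightarrow> (real \<Rightarrow> 'v set set)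
    \<Rightarrow> 'e set \<Rightarrow> real" where
  "excess V c D act F = cost c F - (\<Sum>U\<in>U_sep V D act. yfin act U)"

definition deact :: "(real \<Rightarrow> 'v set set) \<Rightarrow> 'v \<Rightarrow> real" where
  "deact act v = Sup {t. 0 \<le> t \<and> (\<forall>s. 0 \<le> s \<and> s < t \<longrightarrow> v \<in> \<Union>(act s))}"

definition act_conn :: "'v set \<Rightarrow> 'e set \<Rightarrow> ('e \<Rightarrow> 'v set) \<Rightarrow> ('e \<Rightarrow> real)
    \<Rightarrow> (real \<Rightarrow> 'v set set) \<Rightarrow> 'v \<Rightarrow> 'v \<Rightarrow> bool" where
  "act_conn V E endp c act u v \<longleftrightarrow>
     (\<exists>t\<ge>0. \<exists>C\<in>comps_at V E endp c act t. u \<in> C \<and> v \<in> C \<and>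
              t \<le> deact act u \<and> t \<le> deact act v)"

text \<open>Trees of OPT are (vertex sets of) components of (V,OPT).  Two trees end
  up in the same forest iff they are related by the equivalence closure of:
  both connect demand pairs separated by a common U in U_sep.\<close>
definition tree_rel :: "'v set \<Rightarrow> ('e \<Rightarrow> 'v set) \<Rightarrow> 'v set set \<Rightarrow> (real \<Rightarrow> 'v set set)
    \<Rightarrow> 'e set \<Rightarrow> ('v set \<times> 'v set) set" where
  "tree_rel V endp D act OPT =
     {(T1, T2). T1 \<in> comps endp V OPT \<and> T2 \<in> comps endp V OPT \<and>
        (\<exists>U\<in>U_sep V D act. \<exists>d1\<in>D. \<exists>d2\<in>D.
            separates U d1 \<and> separates U d2 \<and> d1 \<subseteq> T1 \<and> d2 \<subseteq> T2)}"

text \<open>the family of forests; a forest is represented by its set of trees\<close>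
definition forests :: "'v set \<Rightarrow> ('e \<Rightarrow> 'v set) \<Rightarrow> 'v set set \<Rightarrow> (real \<Rightarrow> 'v set set)
    \<Rightarrow> 'e set \<Rightarrow> 'v set set set" where
  "forests V endp D act OPT =
     (\<lambda>T. {T'. (T, T') \<in> (tree_rel V endp D act OPT)\<^sup>*}) ` comps endp V OPT"

text \<open>r assigns to each forest its chosen root r_F\<close>
definition canonical :: "'v set \<Rightarrow> 'e set \<Rightarrow> ('e \<Rightarrow> 'v set) \<Rightarrow> ('e \<Rightarrow> real)
    \<Rightarrow> 'v set set \<Rightarrow> (real \<Rightarrow> 'v set set) \<Rightarrow> 'e set \<Rightarrow> ('v set set \<Rightarrow> 'v) \<Rightarrow> 'v set set" where
  "canonical V E endp c D act OPT r =
     {S. \<exists>\<Phi>\<in>forests V endp D act OPT. \<exists>T\<in>\<Phi>.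
           S = {v\<in>T. act_conn V E endp c act v (r \<Phi>)} \<and> S \<noteq> {}}"

definition bad :: "(real \<Rightarrow> 'v set set) \<Rightarrow> 'v set set \<Rightarrow> 'v set \<Rightarrow> real \<Rightarrow> bool" where
  "bad act \<S> S t \<longleftrightarrow>
     (\<exists>U\<in>act t. separates U S \<and> (\<exists>S'\<in>\<S> - {S}. separates U S'))"

end

theory Submission
  imports Defs
begin


lemma adj_sym: "(u, w) \<in> adj endp F \<Longrightarrow> (w, u) \<in> adj endp F"
  unfolding adj_def by (auto simp: insert_commute)

lemma sym_adj: "sym (adj endp F)"
  by (rule symI) (rule adj_sym)

lemma rtr_sym: "(u, w) \<in> (adj endp F)\<^sup>* \<Longrightarrow> (w, u) \<in> (adj endp F)\<^sup>*"
  using sym_rtrancl[OF sym_adj] by (rule symD)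

lemma comp_self: "v \<in> comp endp F v"
  unfolding comp_def by auto

lemma comp_eq:
  assumes "x \<in> comp endp F v"
  shows "comp endp F x = comp endp F v"
proof -
  have vx: "(v, x) \<in> (adj endp F)\<^sup>*" using assms unfolding comp_def by simp
  have xv: "(x, v) \<in> (adj endp F)\<^sup>*" using rtr_sym[OF vx] .
  show ?thesis unfolding comp_def using vx xv by (blast intro: rtrancl_trans)
qed

lemma comps_disj:
  assumes "T \<in> comps endp V F" "T' \<in> comps endp V F" "x \<in> T" "x \<in> T'"
  shows "T = T'"
proof -
  obtain v where v: "T = comp endp F v" using assms(1) unfolding comps_def by blast
  obtain w where w: "T' = comp endp F w" using assms(2) unfolding comps_def by blast
  have "comp endp F x = T" using comp_eq[of x endp F v] assms(3) v by simp
  moreover have "comp endp F x = T'" using comp_eq[of x endp F w] assms(4) w by simp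
  ultimately show ?thesis by simp
qed

lemma rtr_subset:
  assumes "(v, w) \<in> (adj endp F)\<^sup>*" "v \<in> V" "\<forall>e\<in>F. endp e \<subseteq> V"
  shows "w \<in> V"
  using assms(1)
proof (induction rule: rtrancl_induct)
  case base then show ?case using assms by simp
next
  case (step y z)
  then obtain e where "e \<in> F" "endp e = {y, z}" unfolding adj_def by auto
  then show ?case using assms(3) by auto
qed

lemma comps_subset:
  assumes "T \<in> comps endp V F" "\<forall>e\<in>F. endp e \<subseteq> V"
  shows "T \<subseteq> V"
proof
  fix w assume "w \<in> T"
  obtain v where v: "v \<in> V" "T = comp endp F v" using assms(1) unfolding comps_def by blast
  then have "(v, w) \<in> (adj endp F)\<^sup>*" using \<open>w \<in> T\<close> unfolding comp_def by simp
  then show "w \<in> V" by (rule rtr_subset[OF _ v(1) assms(2)])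
qed

lemma cross_edge0:
  assumes "(x, y) \<in> (adj endp F)\<^sup>*" "x \<in> U"
  shows "y \<notin> U \<longrightarrow> (\<exists>e\<in>F. \<exists>a b. endp e = {a, b} \<and> a \<in> U \<and> b \<notin> U \<and>
           (x, a) \<in> (adj endp F)\<^sup>* \<and> (x, b) \<in> (adj endp F)\<^sup>*)"
  using assms(1)
proof (induction rule: rtrancl_induct)
  case base then show ?case using assms(2) by simp
next
  case (step y z)
  show ?case
  proof
    assume zU: "z \<notin> U"
    show "\<exists>e\<in>F. \<exists>a b. endp e = {a, b} \<and> a \<in> U \<and> b \<notin> U \<and>
           (x, a) \<in> (adj endp F)\<^sup>* \<and> (x, b) \<in> (adj endp F)\<^sup>*"
    proof (cases "y \<in> U")
      case True
      from step(2) obtain e where e: "e \<in> F" "endp e = {y, z}" unfolding adj_def by auto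
      have xz: "(x, z) \<in> (adj endp F)\<^sup>*" using step(1,2) by (rule rtrancl_into_rtrancl)
      have "endp e = {y, z} \<and> y \<in> U \<and> z \<notin> U \<and> (x, y) \<in> (adj endp F)\<^sup>* \<and> (x, z) \<in> (adj endp F)\<^sup>*"
        using e(2) True zU step(1) xz by simp
      then show ?thesis using e(1) by blast
    next
      case False
      show ?thesis by (rule mp[OF step.IH False])
    qed
  qed
qed

lemma cross_edge:
  assumes "(x, y) \<in> (adj endp F)\<^sup>*" "x \<in> U" "y \<notin> U"
  shows "\<exists>e\<in>F. \<exists>a b. endp e = {a, b} \<and> a \<in> U \<and> b \<notin> U \<and>
           (x, a) \<in> (adj endp F)\<^sup>* \<and> (x, b) \<in> (adj endp F)\<^sup>*"
  using cross_edge0[OF assms(1,2)] assms(3) by blast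

lemma cross_edge_delta:
  assumes "(x, y) \<in> (adj endp F)\<^sup>*" "x \<in> U" "y \<notin> U" "F \<subseteq> E"
  shows "\<exists>e\<in>F. e \<in> delta E endp U \<and> endp e \<subseteq> comp endp F x"
proof -
  obtain e a b where e: "e \<in> F" "endp e = {a, b}" "a \<in> U" "b \<notin> U"
      "(x, a) \<in> (adj endp F)\<^sup>*" "(x, b) \<in> (adj endp F)\<^sup>*"
    using cross_edge[OF assms(1-3)] by blast
  have "endp e \<inter> U = {a}" using e by auto
  then have "card (endp e \<inter> U) = 1" by simp
  moreover have "e \<in> E" using e(1) assms(4) by blast
  moreover have "endp e \<subseteq> comp endp F x" using e(2,5,6) unfolding comp_def by simp
  ultimately show ?thesis using e(1) unfolding delta_def by blast
qed

lemma tight_block: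
  assumes "e \<in> F" "card (endp e) = 2" "U = comp endp F v"
  shows "card (endp e \<inter> U) \<noteq> 1"
proof -
  obtain a b where ab: "endp e = {a, b}" "a \<noteq> b" using assms(2) by (meson card_2_iff)
  have ab1: "(a, b) \<in> adj endp F" using ab assms(1) unfolding adj_def by auto
  have ab2: "(b, a) \<in> adj endp F" using adj_sym[OF ab1] .
  have "a \<in> U \<longleftrightarrow> b \<in> U"
  proof
    assume "a \<in> U"
    then have "(v, a) \<in> (adj endp F)\<^sup>*" using assms(3) unfolding comp_def by simp
    then have "(v, b) \<in> (adj endp F)\<^sup>*" using ab1 by (rule rtrancl_into_rtrancl)
    then show "b \<in> U" using assms(3) unfolding comp_def by simp
  next
    assume "b \<in> U"
    then have "(v, b) \<in> (adj endp F)\<^sup>*" using assms(3) unfolding comp_def by simp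
    then have "(v, a) \<in> (adj endp F)\<^sup>*" using ab2 by (rule rtrancl_into_rtrancl)
    then show "a \<in> U" using assms(3) unfolding comp_def by simp
  qed
  then have "endp e \<inter> U = {} \<or> endp e \<inter> U = {a, b}" using ab by auto
  then show ?thesis using ab by auto
qed



lemma fin_Ico:
  fixes X :: "real set"
  assumes "X \<in> sets lborel" "X \<subseteq> {0..}"
  shows "emeasure lborel (X \<inter> {s..<t}) < \<infinity>"
proof -
  have "X \<inter> {s..<t} \<subseteq> {0..<max 0 t}" using assms by (auto simp: subset_eq)
  then have "emeasure lborel (X \<inter> {s..<t}) \<le> emeasure lborel {0..<max 0 t}"
    by (rule emeasure_mono) (simp add: atLeastLessThan_borel)
  also have "\<dots> = ennreal (max 0 t)" by simp
  finally have "emeasure lborel (X \<inter> {s..<t}) \<le> ennreal (max 0 t)" .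
  then show ?thesis unfolding infinity_ennreal_def by (rule le_less_trans[OF _ ennreal_less_top])
qed

lemma fin_lt:
  fixes X :: "real set"
  assumes "X \<in> sets lborel" "X \<subseteq> {0..}"
  shows "emeasure lborel (X \<inter> {..<t}) < \<infinity>"
proof -
  have "X \<inter> {..<t} = X \<inter> {0..<t}" using assms by (auto simp: subset_eq)
  then show ?thesis using fin_Ico[OF assms] by simp
qed

lemma meas_split:
  fixes X :: "real set"
  assumes "X \<in> sets lborel" "X \<subseteq> {0..}" "s \<le> t"
  shows "measure lborel (X \<inter> {..<t}) = measure lborel (X \<inter> {..<s}) + measure lborel (X \<inter> {s..<t})"
proof -
  have "X \<inter> {..<t} = (X \<inter> {..<s}) \<union> (X \<inter> {s..<t})" using assms by auto
  moreover have "measure lborel ((X \<inter> {..<s}) \<union> (X \<inter> {s..<t})) = measure lborel (X \<inter> {..<s}) + measure lborel (X \<inter> {s..<t})"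
  proof (rule measure_Union)
    show "emeasure lborel (X \<inter> {..<s}) \<noteq> \<infinity>" using fin_lt[OF assms(1,2), of s] by simp
    show "emeasure lborel (X \<inter> {s..<t}) \<noteq> \<infinity>" using fin_Ico[OF assms(1,2), of s t] by simp
    show "X \<inter> {..<s} \<in> sets lborel" using assms(1) by (simp add: sets.Int lessThan_borel)
    show "X \<inter> {s..<t} \<in> sets lborel" using assms(1) by (simp add: sets.Int atLeastLessThan_borel)
    show "(X \<inter> {..<s}) \<inter> (X \<inter> {s..<t}) = {}" by auto
  qed
  ultimately show ?thesis by simp
qed

lemma meas_Ico_le:
  fixes X :: "real set"
  assumes "X \<in> sets lborel" "X \<subseteq> {0..}" "s \<le> t"
  shows "measure lborel (X \<inter> {s..<t}) \<le> t - s"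
proof -
  have "emeasure lborel (X \<inter> {s..<t}) \<le> emeasure lborel {s..<t}"
    by (rule emeasure_mono) (auto simp: atLeastLessThan_borel)
  also have "\<dots> = ennreal (t - s)" using assms by simp
  finally have "ennreal (measure lborel (X \<inter> {s..<t})) \<le> ennreal (t - s)"
    using fin_Ico[OF assms(1,2), of s t] by (simp add: emeasure_eq_ennreal_measure)
  then show ?thesis using assms by (cases "s = t") (auto simp: ennreal_le_iff2)
qed

lemma Aset_sub: "{s\<in>{0..}. U \<in> act s} \<subseteq> {0::real..}" by auto

lemma yval_eq: "yval act U t = measure lborel ({s\<in>{0..}. U \<in> act s} \<inter> {..<t})"
  unfolding yval_def by (rule arg_cong[where f="measure lborel"]) auto

lemma yval_nonneg: "0 \<le> yval act U t"
  unfolding yval_def by simp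

lemma yval_mono:
  assumes "{s\<in>{0..}. U \<in> act s} \<in> sets lborel" "s \<le> t"
  shows "yval act U s \<le> yval act U t"
  unfolding yval_eq using meas_split[OF assms(1) Aset_sub assms(2)] by auto

lemma yval_lip:
  assumes "{s\<in>{0..}. U \<in> act s} \<in> sets lborel"
  shows "1-lipschitz_on S (yval act U)"
proof (rule lipschitz_onI)
  fix x y :: real
  have *: "\<bar>yval act U t - yval act U s\<bar> \<le> \<bar>t - s\<bar>" if "s \<le> t" for s t
    unfolding yval_eq using meas_split[OF assms(1) Aset_sub that] meas_Ico_le[OF assms(1) Aset_sub that] by auto
  show "dist (yval act U x) (yval act U y) \<le> 1 * dist x y"
    using *[of x y] *[of y x] by (cases "x \<le> y") (auto simp: dist_real_def abs_minus_commute)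
qed simp

lemma yval_cont:
  assumes "{s\<in>{0..}. U \<in> act s} \<in> sets lborel"
  shows "continuous_on S (yval act U)"
  using yval_lip[OF assms] lipschitz_on_continuous_on by blast

lemma yval_const:
  assumes "{s\<in>{0..}. U \<in> act s} \<in> sets lborel" "s \<le> t" "\<forall>x. s \<le> x \<and> x < t \<longrightarrow> U \<notin> act x"
  shows "yval act U t = yval act U s"
proof -
  have "{s\<in>{0..}. U \<in> act s} \<inter> {s..<t} = {}" using assms by auto
  then show ?thesis unfolding yval_eq using meas_split[OF assms(1) Aset_sub assms(2)] by auto
qed

lemma yval_neg: "t \<le> 0 \<Longrightarrow> yval act U t = 0"
  unfolding yval_def by simp



lemma act_eq:
  assumes "moat_run V E endp c D eps act" "0 \<le> t"
  shows "act t = {C\<in>comps_at V E endp c act t. dem_active D C \<or> budget eps D act C t > 0}"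
  using assms unfolding moat_run_def by blast

lemma act_comp:
  assumes "moat_run V E endp c D eps act" "0 \<le> t" "U \<in> act t"
  shows "\<exists>v\<in>V. U = comp endp (tight V E endp c act t) v"
proof -
  have "U \<in> comps_at V E endp c act t" using act_eq[OF assms(1,2)] assms(3) by blast
  then show ?thesis unfolding comps_at_def comps_def by blast
qed

lemma meas_A:
  assumes "moat_run V E endp c D eps act"
  shows "{s\<in>{0..}. U \<in> act s} \<in> sets lborel"
  using assms unfolding moat_run_def by blast

lemma act_subV:
  assumes "moat_run V E endp c D eps act" "0 \<le> t" "U \<in> act t" "\<forall>e\<in>E. endp e \<subseteq> V \<and> card (endp e) = 2"
  shows "U \<subseteq> V"
proof -
  obtain v where v: "v \<in> V" "U = comp endp (tight V E endp c act t) v"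
    using act_comp[OF assms(1-3)] by blast
  have "\<forall>e\<in>tight V E endp c act t. endp e \<subseteq> V" using assms(4) unfolding tight_def by auto
  then show ?thesis using comps_subset[of U endp V "tight V E endp c act t"] v
    unfolding comps_def by blast
qed

lemma dual_feas:
  assumes fin: "finite V" and Ep: "\<forall>e\<in>E. endp e \<subseteq> V \<and> card (endp e) = 2"
    and cpos: "\<forall>e\<in>E. 0 \<le> c e" and mr: "moat_run V E endp c D eps act" and eE: "e \<in> E"
  shows "(\<Sum>U\<in>{U\<in>Pow V. e \<in> delta E endp U}. yval act U t) \<le> c e"
proof (rule ccontr)
  define P where "P = {U\<in>Pow V. e \<in> delta E endp U}"
  define g where "g = (\<lambda>t. \<Sum>U\<in>P. yval act U t)"
  assume "\<not> ?thesis"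
  then have gt: "c e < g t" unfolding g_def P_def by simp
  have meas: "\<And>U. {s\<in>{0..}. U \<in> act s} \<in> sets lborel" using meas_A[OF mr] .
  have ce: "0 \<le> c e" using cpos eE by blast
  have gneg: "g x = 0" if "x \<le> 0" for x unfolding g_def by (rule sum.neutral) (use yval_neg[OF that] in blast)
  have t0: "0 \<le> t" using gneg[of t] gt ce by force
  have cont: "continuous_on {0..t} g" unfolding g_def
    by (intro continuous_on_sum yval_cont meas)
  obtain s0 where s0: "0 \<le> s0" "s0 \<le> t" "g s0 = c e"
    using IVT'[of g 0 "c e" t, OF _ _ t0 cont] gneg[of 0] ce gt by auto
  have mono: "g x \<le> g y" if "x \<le> y" for x y unfolding g_def
    by (intro sum_mono yval_mono meas that)
  have blk: "U \<notin> act x" if "s0 \<le> x" "U \<in> P" for x U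
  proof
    assume Ux: "U \<in> act x"
    have x0: "0 \<le> x" using that s0 by simp
    obtain v where v: "U = comp endp (tight V E endp c act x) v" using act_comp[OF mr x0 Ux] by blast
    have "c e \<le> g x" using mono[OF that(1)] s0 by simp
    then have "e \<in> tight V E endp c act x" unfolding tight_def g_def P_def using eE by simp
    then have "card (endp e \<inter> U) \<noteq> 1" using tight_block[OF _ _ v] Ep eE by blast
    moreover have "card (endp e \<inter> U) = 1" using that(2) unfolding P_def delta_def by simp
    ultimately show False by simp
  qed
  have "g t = g s0" unfolding g_def
    by (intro sum.cong refl yval_const meas) (use s0 blk in auto)
  then show False using gt s0 by simp
qed



lemma yfin_lim:
  fixes X :: "real set"
  assumes X: "X \<in> sets lborel" "X \<subseteq> {0..}" and bnd: "\<And>t. measure lborel (X \<inter> {..<t}) \<le> B"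
  shows "emeasure lborel X < \<infinity>" "(\<lambda>n. measure lborel (X \<inter> {..<real n})) \<longlonglongrightarrow> measure lborel X"
proof -
  define Y where "Y = (\<lambda>n::nat. X \<inter> {..<real n})"
  have rng: "range Y \<subseteq> sets lborel" unfolding Y_def using X by auto
  have inc: "incseq Y" unfolding Y_def incseq_def by auto
  have un: "(\<Union>i. Y i) = X"
  proof
    show "X \<subseteq> (\<Union>i. Y i)"
    proof
      fix x assume "x \<in> X"
      moreover obtain n :: nat where "x < real n" using reals_Archimedean2 by blast
      ultimately show "x \<in> (\<Union>i. Y i)" unfolding Y_def by auto
    qed
  qed (auto simp: Y_def)
  have "emeasure lborel (Y n) \<le> ennreal B" for n
  proof -
    have "emeasure lborel (Y n) = ennreal (measure lborel (Y n))"
      using fin_lt[OF X, of "real n"] unfolding Y_def by (simp add: emeasure_eq_ennreal_measure)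
    also have "\<dots> \<le> ennreal B" using bnd[of "real n"] unfolding Y_def by (simp add: ennreal_leI)
    finally show ?thesis .
  qed
  then have "(SUP n. emeasure lborel (Y n)) \<le> ennreal B" by (simp add: SUP_least)
  then have le: "emeasure lborel X \<le> ennreal B" using SUP_emeasure_incseq[OF rng inc] un by simp
  then show fin: "emeasure lborel X < \<infinity>" unfolding infinity_ennreal_def by (rule le_less_trans[OF _ ennreal_less_top])
  show "(\<lambda>n. measure lborel (X \<inter> {..<real n})) \<longlonglongrightarrow> measure lborel X"
    using Lim_measure_incseq[OF rng inc] un fin unfolding Y_def by simp
qed

lemma yfin_bound:
  assumes fin: "finite V" and Ep: "\<forall>e\<in>E. endp e \<subseteq> V \<and> card (endp e) = 2"
    and cpos: "\<forall>e\<in>E. 0 \<le> c e" and mr: "moat_run V E endp c D eps act" and eE: "e \<in> E"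
  shows "(\<Sum>U\<in>{U\<in>Pow V. e \<in> delta E endp U}. yfin act U) \<le> c e"
    and "\<And>U. U \<subseteq> V \<Longrightarrow> e \<in> delta E endp U \<Longrightarrow> emeasure lborel {s\<in>{0..}. U \<in> act s} < \<infinity>"
proof -
  define P where "P = {U\<in>Pow V. e \<in> delta E endp U}"
  have finP: "finite P" unfolding P_def using fin by simp
  have meas: "\<And>U. {s\<in>{0..}. U \<in> act s} \<in> sets lborel" using meas_A[OF mr] .
  have bnd: "measure lborel ({s\<in>{0..}. U \<in> act s} \<inter> {..<t}) \<le> c e" if "U \<in> P" for U t
  proof -
    have "yval act U t \<le> (\<Sum>U\<in>P. yval act U t)"
      by (rule member_le_sum) (use that finP yval_nonneg in auto)
    also have "\<dots> \<le> c e" unfolding P_def by (rule dual_feas[OF fin Ep cpos mr eE])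
    finally show ?thesis unfolding yval_eq .
  qed
  show "emeasure lborel {s\<in>{0..}. U \<in> act s} < \<infinity>" if "U \<subseteq> V" "e \<in> delta E endp U" for U
    using yfin_lim(1)[OF meas Aset_sub bnd] that unfolding P_def by auto
  have lim: "(\<lambda>n. \<Sum>U\<in>P. yval act U (real n)) \<longlonglongrightarrow> (\<Sum>U\<in>P. yfin act U)"
    unfolding yval_eq yfin_def
    by (intro tendsto_sum yfin_lim(2)[OF meas Aset_sub bnd]) 
  have "(\<Sum>U\<in>P. yval act U (real n)) \<le> c e" for n
    unfolding P_def by (rule dual_feas[OF fin Ep cpos mr eE])
  then show "(\<Sum>U\<in>{U\<in>Pow V. e \<in> delta E endp U}. yfin act U) \<le> c e"
    using LIMSEQ_le_const2[OF lim] unfolding P_def by blast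
qed



lemma sym_tree_rel: "sym (tree_rel V endp D act OPT)"
  unfolding tree_rel_def sym_def by blast

lemma forest_prop:
  assumes "\<Phi> \<in> forests V endp D act OPT" "T \<in> \<Phi>"
  shows "T \<in> comps endp V OPT" "\<Phi> = {T'. (T, T') \<in> (tree_rel V endp D act OPT)\<^sup>*}"
proof -
  let ?R = "tree_rel V endp D act OPT"
  obtain T0 where T0: "T0 \<in> comps endp V OPT" "\<Phi> = {T'. (T0, T') \<in> ?R\<^sup>*}"
    using assms(1) unfolding forests_def by blast
  have TT: "(T0, T) \<in> ?R\<^sup>*" using assms(2) T0(2) by simp
  then show "T \<in> comps endp V OPT"
  proof (cases rule: rtranclE)
    case base then show ?thesis using T0 by simp
  next
    case (step y) then show ?thesis unfolding tree_rel_def by simp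
  qed
  have sy: "(T, T0) \<in> ?R\<^sup>*" using sym_rtrancl[OF sym_tree_rel] TT by (rule symD)
  show "\<Phi> = {T'. (T, T') \<in> ?R\<^sup>*}"
  proof (rule set_eqI)
    fix x
    show "x \<in> \<Phi> \<longleftrightarrow> x \<in> {T'. (T, T') \<in> ?R\<^sup>*}"
    proof
      assume "x \<in> \<Phi>"
      then have "(T0, x) \<in> ?R\<^sup>*" using T0(2) by simp
      then have "(T, x) \<in> ?R\<^sup>*" by (rule rtrancl_trans[OF sy])
      then show "x \<in> {T'. (T, T') \<in> ?R\<^sup>*}" by simp
    next
      assume "x \<in> {T'. (T, T') \<in> ?R\<^sup>*}"
      then have "(T, x) \<in> ?R\<^sup>*" by simp
      then have "(T0, x) \<in> ?R\<^sup>*" by (rule rtrancl_trans[OF TT])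
      then show "x \<in> \<Phi>" using T0(2) by simp
    qed
  qed
qed

lemma canon_tree:
  assumes "S \<in> canonical V E endp c D act OPT r"
  shows "\<exists>T\<in>comps endp V OPT. S \<subseteq> T \<and> S \<noteq> {}"
proof -
  obtain \<Phi> T where P: "\<Phi> \<in> forests V endp D act OPT" "T \<in> \<Phi>"
      "S = {v\<in>T. act_conn V E endp c act v (r \<Phi>)}" "S \<noteq> {}"
    using assms unfolding canonical_def by blast
  have "T \<in> comps endp V OPT" by (rule forest_prop(1)[OF P(1,2)])
  moreover have "S \<subseteq> T" using P(3) by blast
  ultimately show ?thesis using P(4) by blast
qed

lemma canon_unique:
  assumes "S \<in> canonical V E endp c D act OPT r" "S' \<in> canonical V E endp c D act OPT r"
    "T \<in> comps endp V OPT" "S \<subseteq> T" "S' \<subseteq> T"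
  shows "S = S'"
proof -
  have key: "X = {v\<in>T. act_conn V E endp c act v (r {T'. (T, T') \<in> (tree_rel V endp D act OPT)\<^sup>*})}"
    if XX: "X \<in> canonical V E endp c D act OPT r" "X \<subseteq> T" for X
  proof -
    obtain \<Phi> T0 where P: "\<Phi> \<in> forests V endp D act OPT" "T0 \<in> \<Phi>"
      "X = {v\<in>T0. act_conn V E endp c act v (r \<Phi>)}" "X \<noteq> {}"
      using XX(1) unfolding canonical_def by blast
    have T0c: "T0 \<in> comps endp V OPT" by (rule forest_prop(1)[OF P(1,2)])
    obtain x where x: "x \<in> X" using P(4) by blast
    have "x \<in> T0" using P(3) x by simp
    moreover have "x \<in> T" using XX(2) x by blast
    ultimately have "T0 = T" by (rule comps_disj[OF T0c assms(3)])
    then show ?thesis using P(3) forest_prop(2)[OF P(1,2)] by simp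
  qed
  show ?thesis using key[OF assms(1,4)] key[OF assms(2,5)] by simp
qed

lemma canon_subV:
  assumes "S \<in> canonical V E endp c D act OPT r" "\<forall>e\<in>OPT. endp e \<subseteq> V"
  shows "S \<subseteq> V"
proof -
  obtain T where T: "T \<in> comps endp V OPT" "S \<subseteq> T" using canon_tree[OF assms(1)] by blast
  have "T \<subseteq> V" by (rule comps_subset[OF T(1) assms(2)])
  then show ?thesis using T(2) by (rule subset_trans[rotated])
qed



lemma sep_edge:
  assumes "T \<in> comps endp V OPT" "x \<in> T" "y \<in> T" "x \<in> U" "y \<notin> U" "OPT \<subseteq> E"
  shows "\<exists>e\<in>OPT. e \<in> delta E endp U \<and> endp e \<subseteq> T"
proof -
  obtain v where v: "T = comp endp OPT v" using assms(1) unfolding comps_def by blast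
  have vx: "(v, x) \<in> (adj endp OPT)\<^sup>*" using assms(2) v unfolding comp_def by simp
  have vy: "(v, y) \<in> (adj endp OPT)\<^sup>*" using assms(3) v unfolding comp_def by simp
  have xy: "(x, y) \<in> (adj endp OPT)\<^sup>*" by (rule rtrancl_trans[OF rtr_sym[OF vx] vy])
  obtain e where e: "e \<in> OPT" "e \<in> delta E endp U" "endp e \<subseteq> comp endp OPT x"
    using cross_edge_delta[OF xy assms(4,5,6)] by blast
  have "comp endp OPT x = T" using comp_eq[of x endp OPT v] assms(2) v by simp
  then show ?thesis using e by auto
qed

lemma sep_count:
  assumes OE: "OPT \<subseteq> E" and finE: "finite E" and Ep: "\<forall>e\<in>E. card (endp e) = 2"
  shows "card {S\<in>canonical V E endp c D act OPT r. separates U S} \<le> card (delta E endp U \<inter> OPT)"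
proof -
  let ?C = "canonical V E endp c D act OPT r"
  let ?Q = "\<lambda>S e. e \<in> OPT \<and> e \<in> delta E endp U \<and> (\<exists>T\<in>comps endp V OPT. S \<subseteq> T \<and> endp e \<subseteq> T)"
  define f where "f S = (SOME e. ?Q S e)" for S
  have ex: "?Q S (f S)" if SS: "S \<in> {S\<in>?C. separates U S}" for S
  proof -
    have SC: "S \<in> ?C" using SS by simp
    obtain T where T: "T \<in> comps endp V OPT" "S \<subseteq> T" using canon_tree[OF SC] by blast
    obtain x y where xy: "x \<in> S" "x \<in> U" "y \<in> S" "y \<notin> U" using SS unfolding separates_def by blast
    have "x \<in> T" "y \<in> T" using xy T(2) by auto
    then obtain e where e: "e\<in>OPT" "e \<in> delta E endp U" "endp e \<subseteq> T"
      using sep_edge[OF T(1) _ _ xy(2) xy(4) OE] by blast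
    have "\<exists>e. ?Q S e" using e T by blast
    then show ?thesis unfolding f_def by (rule someI_ex)
  qed
  have inj: "inj_on f {S\<in>?C. separates U S}"
  proof (rule inj_onI)
    fix S S' assume S: "S \<in> {S\<in>?C. separates U S}" and S': "S' \<in> {S\<in>?C. separates U S}" and eq: "f S = f S'"
    obtain T where T: "T \<in> comps endp V OPT" "S \<subseteq> T" "endp (f S) \<subseteq> T" using ex[OF S] by blast
    obtain T' where T': "T' \<in> comps endp V OPT" "S' \<subseteq> T'" "endp (f S') \<subseteq> T'" using ex[OF S'] by blast
    have "f S \<in> E" using ex[OF S] OE by blast
    then have "card (endp (f S)) = 2" using Ep by blast
    then have "endp (f S) \<noteq> {}" by auto
    then obtain z where z: "z \<in> endp (f S)" by blast
    have "z \<in> T" using z T(3) by blast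
    moreover have "z \<in> T'" using z T'(3) eq by auto
    ultimately have "T = T'" by (rule comps_disj[OF T(1) T'(1)])
    moreover have "S \<in> ?C" "S' \<in> ?C" using S S' by auto
    ultimately show "S = S'" using canon_unique[of S V E endp c D act OPT r S' T] T(1,2) T'(2) by simp
  qed
  have img: "f ` {S\<in>?C. separates U S} \<subseteq> delta E endp U \<inter> OPT" using ex by blast
  have "finite (delta E endp U \<inter> OPT)" using finE unfolding delta_def by simp
  then show ?thesis using card_inj_on_le[OF inj img] by simp
qed

lemma usep_edge:
  assumes "U \<in> U_sep V D act" "feasible V E endp D OPT"
  shows "delta E endp U \<inter> OPT \<noteq> {}"
proof -
  obtain d where d: "d \<in> D" "separates U d" using assms(1) unfolding U_sep_def by blast
  have OE: "OPT \<subseteq> E" using assms(2) unfolding feasible_def by simp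
  obtain T where T: "T \<in> comps endp V OPT" "d \<subseteq> T"
    using assms(2) d(1) unfolding feasible_def by blast
  obtain x y where xy: "x \<in> d" "x \<in> U" "y \<in> d" "y \<notin> U" using d(2) unfolding separates_def by blast
  have "x \<in> T" "y \<in> T" using xy T(2) by auto
  then obtain e where "e\<in>OPT" "e \<in> delta E endp U"
    using sep_edge[OF T(1) _ _ xy(2) xy(4) OE] by blast
  then show ?thesis by blast
qed


theorem lemma6p8:
  fixes V :: "'v set" and E :: "'e set" and endp :: "'e \<Rightarrow> 'v set"
    and c :: "'e \<Rightarrow> real" and D :: "'v set set" and eps :: real
    and act :: "real \<Rightarrow> 'v set set" and OPT :: "'e set"
    and r :: "'v set set \<Rightarrow> 'v"
  assumes "finite V" and "finite E"
    and "\<forall>e\<in>E. endp e \<subseteq> V \<and> card (endp e) = 2"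
    and "\<forall>e\<in>E. 0 \<le> c e"
    and "\<forall>d\<in>D. d \<subseteq> V \<and> card d = 2"
    and "0 \<le> eps"
    and "moat_run V E endp c D eps act"
    and "feasible V E endp D OPT"
    and "\<forall>F. feasible V E endp D F \<longrightarrow> cost c OPT \<le> cost c F"
    and "\<forall>e\<in>OPT. c e = 0 \<longrightarrow> \<not> feasible V E endp D (OPT - {e})"
    and "\<forall>\<Phi>\<in>forests V endp D act OPT. r \<Phi> \<in> \<Union>\<Phi> \<and>
           (\<forall>v\<in>\<Union>\<Phi>. deact act v \<le> deact act (r \<Phi>))"
  shows "let \<S> = canonical V E endp c D act OPT r;
             f = (\<lambda>t. real (card {S\<in>\<S>. bad act \<S> S t}))
         in set_integrable lborel {0..} f \<and>
            (LINT t:{0..}|lborel. f t) \<le> 2 * excess V c D act OPT"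
proof -
  note fin = assms(1) and finE = assms(2) and Ep = assms(3) and cpos = assms(4)
    and mr = assms(7) and feas = assms(8)
  define SS where "SS = canonical V E endp c D act OPT r"
  define f where "f = (\<lambda>t. real (card {S\<in>SS. bad act SS S t}))"
  define A where "A = (\<lambda>U. {s\<in>{0::real..}. U \<in> act s})"
  define k where "k = (\<lambda>U. card {S\<in>SS. separates U S})"
  define h where "h = (\<lambda>U. if 2 \<le> k U then real (k U) else 0)"
  define w where "w = (\<lambda>U. real (card (delta E endp U \<inter> OPT)) - (if U \<in> U_sep V D act then 1 else 0))"
  define B where "B = (\<lambda>S. \<Union>U\<in>{U\<in>Pow V. separates U S \<and> (\<exists>S'\<in>SS-{S}. separates U S')}. A U)"
  define G where "G = (\<lambda>t. \<Sum>U\<in>Pow V. h U * indicator (A U) t)"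
  have OE: "OPT \<subseteq> E" using feas unfolding feasible_def by simp
  have finO: "finite OPT" using finite_subset[OF OE finE] .
  have OV: "\<forall>e\<in>OPT. endp e \<subseteq> V" using OE Ep by blast
  have SSV: "SS \<subseteq> Pow V"
  proof
    fix S assume "S \<in> SS"
    then have "S \<subseteq> V" unfolding SS_def by (rule canon_subV[OF _ OV])
    then show "S \<in> Pow V" by simp
  qed
  have finSS: "finite SS" using finite_subset[OF SSV] fin by simp
  have finPV: "finite (Pow V)" using fin by simp
  have measA: "A U \<in> sets lborel" for U unfolding A_def by (rule meas_A[OF mr])
  have kle: "k U \<le> card (delta E endp U \<inter> OPT)" for U
    unfolding k_def SS_def using sep_count[OF OE finE] Ep by blast
  have finD: "finite (delta E endp U \<inter> OPT)" for U using finO by simp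
  have finA: "emeasure lborel (A U) < \<infinity>" if "U \<subseteq> V" "h U \<noteq> 0" for U
  proof -
    have "2 \<le> k U" using that(2) unfolding h_def by (auto split: if_splits)
    then have "2 \<le> card (delta E endp U \<inter> OPT)" using kle[of U] by linarith
    then have "delta E endp U \<inter> OPT \<noteq> {}" by auto
    then obtain e where e: "e \<in> OPT" "e \<in> delta E endp U" by blast
    have eE: "e \<in> E" using e(1) OE by blast
    show ?thesis unfolding A_def by (rule yfin_bound(2)[OF fin Ep cpos mr eE that(1) e(2)])
  qed
  have w0: "0 \<le> w U" for U
  proof (cases "U \<in> U_sep V D act")
    case True
    then have "delta E endp U \<inter> OPT \<noteq> {}" by (rule usep_edge[OF _ feas])
    then have "1 \<le> card (delta E endp U \<inter> OPT)" using finD[of U]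
      by (simp add: Suc_leI card_gt_0_iff)
    then show ?thesis unfolding w_def using True by simp
  next
    case False
    then show ?thesis unfolding w_def by simp
  qed
  have hw: "h U \<le> 2 * w U" for U
  proof (cases "2 \<le> k U")
    case True
    have "real (k U) \<le> real (card (delta E endp U \<inter> OPT))" using kle[of U] by simp
    then have "real (k U) - 1 \<le> w U" unfolding w_def by simp
    then show ?thesis unfolding h_def using True by simp
  next
    case False
    then show ?thesis unfolding h_def using w0[of U] by simp
  qed
  have h0: "0 \<le> h U" for U unfolding h_def by simp
  have intU: "integrable lborel (\<lambda>t. h U * indicator (A U) t)" if "U \<in> Pow V" for U
  proof (rule integrable_mult_right)
    assume "h U \<noteq> 0"
    then have "emeasure lborel (A U) < \<infinity>" using finA that by blast
    then show "integrable lborel (indicator (A U) :: real \<Rightarrow> real)"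
      using measA[of U] by (intro integrable_real_indicator) auto
  qed
  have Gint: "integrable lborel G" unfolding G_def by (rule Bochner_Integration.integrable_sum[where f="\<lambda>U t. h U * indicator (A U) t"]) (rule intU)
  have GI: "integral\<^sup>L lborel G = (\<Sum>U\<in>Pow V. h U * yfin act U)"
  proof -
    have "integral\<^sup>L lborel G = (\<Sum>U\<in>Pow V. integral\<^sup>L lborel (\<lambda>t. h U * indicator (A U) t))"
      unfolding G_def by (rule Bochner_Integration.integral_sum[where f="\<lambda>U t. h U * indicator (A U) t"]) (rule intU)
    also have "\<dots> = (\<Sum>U\<in>Pow V. h U * yfin act U)"
      by (rule sum.cong) (simp_all add: A_def yfin_def)
    finally show ?thesis .
  qed
  have actV: "U \<subseteq> V" if "0 \<le> t" "U \<in> act t" for t U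
    by (rule act_subV[OF mr that Ep])
  have inB: "t \<in> B S \<longleftrightarrow> 0 \<le> t \<and> bad act SS S t" for t S
  proof
    assume "t \<in> B S"
    then obtain U where U: "U \<in> Pow V" "separates U S" "\<exists>S'\<in>SS-{S}. separates U S'" "t \<in> A U"
      unfolding B_def by blast
    then show "0 \<le> t \<and> bad act SS S t" unfolding bad_def A_def by auto
  next
    assume a: "0 \<le> t \<and> bad act SS S t"
    then obtain U where U: "U \<in> act t" "separates U S" "\<exists>S'\<in>SS-{S}. separates U S'"
      unfolding bad_def by blast
    have "U \<in> Pow V" using actV[of t U] a U(1) by simp
    moreover have "t \<in> A U" using a U(1) unfolding A_def by simp
    ultimately show "t \<in> B S" unfolding B_def using U(2,3) by blast
  qed
  have f_eq: "indicator {0..} t *\<^sub>R f t = (\<Sum>S\<in>SS. indicator (B S) t)" for t :: real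
  proof (cases "0 \<le> t")
    case True
    have "f t = real (card {S\<in>SS. bad act SS S t})" unfolding f_def by simp
    also have "\<dots> = (\<Sum>S\<in>{S\<in>SS. bad act SS S t}. 1)" by simp
    also have "\<dots> = (\<Sum>S\<in>SS. if bad act SS S t then 1 else 0)"
      by (rule sum.inter_filter[OF finSS])
    also have "\<dots> = (\<Sum>S\<in>SS. indicator (B S) t)"
      by (rule sum.cong) (simp_all add: indicator_def inB True)
    finally show ?thesis using True by simp
  next
    case False
    have "indicator (B S) t = (0::real)" for S using inB[of t S] False by simp
    then show ?thesis using False by simp
  qed
  have measB: "B S \<in> sets lborel" for S
    unfolding B_def by (rule sets.finite_UN) (use finPV measA in auto)
  have measf: "(\<lambda>t. indicator {0..} t *\<^sub>R f t) \<in> borel_measurable lborel"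
    unfolding f_eq by (intro borel_measurable_sum borel_measurable_indicator measB)
  have fle: "indicator {0..} t *\<^sub>R f t \<le> G t" for t :: real
  proof (cases "0 \<le> t")
    case False
    have "0 \<le> G t" unfolding G_def using h0 by (intro sum_nonneg) simp
    then show ?thesis using False by simp
  next
    case True
    define Q where "Q = {U\<in>Pow V. U \<in> act t \<and> 2 \<le> k U}"
    have finQ: "finite Q" unfolding Q_def using finPV by simp
    have sub: "{S\<in>SS. bad act SS S t} \<subseteq> (\<Union>U\<in>Q. {S\<in>SS. separates U S})"
    proof
      fix S assume S: "S \<in> {S\<in>SS. bad act SS S t}"
      then obtain U S' where U: "U \<in> act t" "separates U S" "S' \<in> SS" "S' \<noteq> S" "separates U S'"
        unfolding bad_def by blast
      have "{S, S'} \<subseteq> {S\<in>SS. separates U S}" using S U by auto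
      then have "card {S, S'} \<le> k U" unfolding k_def using finSS by (intro card_mono) auto
      then have "2 \<le> k U" using U(4) by simp
      moreover have "U \<in> Pow V" using actV[OF True U(1)] by simp
      ultimately have "U \<in> Q" unfolding Q_def using U(1) by simp
      then show "S \<in> (\<Union>U\<in>Q. {S\<in>SS. separates U S})" using S U(2) by blast
    qed
    have "card {S\<in>SS. bad act SS S t} \<le> card (\<Union>U\<in>Q. {S\<in>SS. separates U S})"
      by (rule card_mono[OF _ sub]) (use finQ finSS in auto)
    also have "\<dots> \<le> (\<Sum>U\<in>Q. card {S\<in>SS. separates U S})"
      by (rule card_UN_le[OF finQ])
    finally have c1: "card {S\<in>SS. bad act SS S t} \<le> (\<Sum>U\<in>Q. k U)"
      unfolding k_def by simp
    have "real (card {S\<in>SS. bad act SS S t}) \<le> (\<Sum>U\<in>Q. real (k U))"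
      using of_nat_mono[OF c1, where 'a=real] by (simp add: of_nat_sum)
    also have "\<dots> = (\<Sum>U\<in>Pow V. if U \<in> act t \<and> 2 \<le> k U then real (k U) else 0)"
      unfolding Q_def by (rule sum.inter_filter[OF finPV])
    also have "\<dots> = G t" unfolding G_def
      by (rule sum.cong) (simp_all add: h_def A_def indicator_def True)
    finally show ?thesis using True unfolding f_def by simp
  qed
  have fnn: "0 \<le> indicator {0..} t *\<^sub>R f t" for t :: real unfolding f_def by simp
  have fint: "integrable lborel (\<lambda>t. indicator {0..} t *\<^sub>R f t)"
  proof (rule Bochner_Integration.integrable_bound[OF Gint measf])
    show "AE x in lborel. norm (indicator {0..} x *\<^sub>R f x) \<le> norm (G x)"
    proof (rule AE_I2)
      fix x :: real
      have "0 \<le> G x" using fnn[of x] fle[of x] by linarith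
      then show "norm (indicator {0..} x *\<^sub>R f x) \<le> norm (G x)"
        using fnn[of x] fle[of x] by simp
    qed
  qed
  have "(LINT t:{0..}|lborel. f t) = integral\<^sup>L lborel (\<lambda>t. indicator {0..} t *\<^sub>R f t)"
    unfolding set_lebesgue_integral_def by simp
  also have "\<dots> \<le> integral\<^sup>L lborel G"
    by (rule Bochner_Integration.integral_mono[OF fint Gint fle])
  also have "\<dots> = (\<Sum>U\<in>Pow V. h U * yfin act U)" by (rule GI)
  also have "\<dots> \<le> (\<Sum>U\<in>Pow V. 2 * w U * yfin act U)"
    by (rule sum_mono) (use hw in \<open>simp add: yfin_def mult_right_mono\<close>)
  also have "\<dots> = 2 * ((\<Sum>U\<in>Pow V. real (card (delta E endp U \<inter> OPT)) * yfin act U)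
                   - (\<Sum>U\<in>Pow V. if U \<in> U_sep V D act then yfin act U else 0))"
  proof -
    have "(\<Sum>U\<in>Pow V. 2 * w U * yfin act U) = (\<Sum>U\<in>Pow V. 2 * (real (card (delta E endp U \<inter> OPT)) * yfin act U
                   - (if U \<in> U_sep V D act then yfin act U else 0)))"
      by (rule sum.cong) (auto simp: w_def algebra_simps)
    also have "\<dots> = 2 * ((\<Sum>U\<in>Pow V. real (card (delta E endp U \<inter> OPT)) * yfin act U)
                   - (\<Sum>U\<in>Pow V. if U \<in> U_sep V D act then yfin act U else 0))"
      by (simp add: sum_subtractf flip: sum_distrib_left)
    finally show ?thesis .
  qed
  also have "(\<Sum>U\<in>Pow V. if U \<in> U_sep V D act then yfin act U else 0) = (\<Sum>U\<in>U_sep V D act. yfin act U)"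
  proof -
    have "U_sep V D act = {U\<in>Pow V. U \<in> U_sep V D act}" unfolding U_sep_def by auto
    then show ?thesis using sum.inter_filter[OF finPV, of "yfin act" "\<lambda>U. U \<in> U_sep V D act"] by simp
  qed
  also have "(\<Sum>U\<in>Pow V. real (card (delta E endp U \<inter> OPT)) * yfin act U) \<le> cost c OPT"
  proof -
    have "(\<Sum>U\<in>Pow V. real (card (delta E endp U \<inter> OPT)) * yfin act U)
        = (\<Sum>U\<in>Pow V. \<Sum>e\<in>OPT. if e \<in> delta E endp U then yfin act U else 0)"
    proof (rule sum.cong[OF refl])
      fix U
      have "delta E endp U \<inter> OPT = {e\<in>OPT. e \<in> delta E endp U}" by auto
      then have "real (card (delta E endp U \<inter> OPT)) = (\<Sum>e\<in>OPT. if e \<in> delta E endp U then 1 else 0)"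
        using finO by (simp add: sum.inter_filter[symmetric])
      then show "real (card (delta E endp U \<inter> OPT)) * yfin act U
          = (\<Sum>e\<in>OPT. if e \<in> delta E endp U then yfin act U else 0)"
        by (simp add: sum_distrib_right) (rule sum.cong, auto)
    qed
    also have "\<dots> = (\<Sum>e\<in>OPT. \<Sum>U\<in>Pow V. if e \<in> delta E endp U then yfin act U else 0)"
      by (rule sum.swap)
    also have "\<dots> = (\<Sum>e\<in>OPT. \<Sum>U\<in>{U\<in>Pow V. e \<in> delta E endp U}. yfin act U)"
      by (rule sum.cong[OF refl]) (rule sum.inter_filter[OF finPV, symmetric])
    also have "\<dots> \<le> (\<Sum>e\<in>OPT. c e)"
    proof (rule sum_mono)
      fix e assume "e \<in> OPT"
      then have eE: "e \<in> E" using OE by blast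
      show "(\<Sum>U\<in>{U\<in>Pow V. e \<in> delta E endp U}. yfin act U) \<le> c e"
        by (rule yfin_bound(1)[OF fin Ep cpos mr eE])
    qed
    finally show ?thesis unfolding cost_def .
  qed
  finally have final: "(LINT t:{0..}|lborel. f t) \<le> 2 * excess V c D act OPT"
    unfolding excess_def by simp
  have "set_integrable lborel {0..} f" unfolding set_integrable_def by (rule fint)
  then show ?thesis using final unfolding Let_def SS_def[symmetric] f_def[symmetric] by simp
qed


end
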